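(* Let $k\ge 2$ and let $a\in A_i$ be an additive agent. Suppose an allocation $(G_1,\dots,G_k)$ is PROP$(k-1)$ for $a$. Then: (a) the allocation is $1/k$-fraction-MMS-fair for $a$; moreover the factor $1/k$ is tight: there exist an additive agent and an allocation among $k$ groups that is EF1 (hence PROP$(k-1)$) for that agent such that the agent's utility is exactly $\frac1k$ of her maximin share $\mathrm{MMS}^k$; (b) the allocation is 1-out-of-$(2k-1)$ MMS-fair for $a$; moreover $2k-1$ is tight: there exist an additive agent and an allocation among $k$ groups that is EF1 (hence PROP$(k-1)$) for that agent but not 1-out-of-$(2k-2)$ MMS-fair for her; (c) if $a$ is binary, the allocation is MMS-fair for $a$; moreover, for a binary agent, MMS-fairness implies PROP$(k-1)$.
   Context: There is a finite set $G$ of goods and $k\ge 2$ groups $A_1,\dots,A_k$ of agents. Each agent $a$ has a utility function $u_a:2^G\to\mathbb{R}_{\ge 0}$; it is additive if $u_a(X)=\sum_{g\in X}u_a(\{g\})$, and binary if additive with $u_a(\{g\})\in\{0,1\}$ for every good $g$. An allocation is a partition $(G_1,\dots,G_k)$ of $G$; group $A_i$ receives $G_i$ and each agent $a\in A_i$ gets $u_a(G_i)$. For an agent $a\in A_i$ and integer $c\ge 0$: the allocation is EF$c$ for $a$ if for every $i'$ there is $C\subseteq G_{i'}$, $|C|\le c$, with $u_a(G_i)\ge u_a(G_{i'}\setminus C)$; it is PROP$c$ for $a$ if there is $C\subseteq G\setminus G_i$, $|C|\le c$, with $u_a(G_i)\ge\frac1k u_a(G\setminus C)$. For an integer $c\ge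 1$, $\mathrm{MMS}^c_a(G)=\max\min(u_a(P_1),\dots,u_a(P_c))$, the maximum over all partitions $(P_1,\dots,P_c)$ of $G$ into $c$ sets. The allocation is MMS-fair for $a$ if $u_a(G_i)\ge \mathrm{MMS}^k_a(G)$; 1-out-of-$c$ MMS-fair for $a$ (for $c\ge k$) if $u_a(G_i)\ge\mathrm{MMS}^c_a(G)$; $q$-fraction-MMS-fair for $a$ if $u_a(G_i)\ge q\,\mathrm{MMS}^k_a(G)$. *)

theory Defs
  imports Complex_Main
begin

text \<open>Partition of the good set G into c (possibly empty) bundles indexed by 0..c-1.
  An allocation among k groups is such a partition with c = k; group i receives P i.\<close>
definition is_partition :: "'g set \<Rightarrow> nat \<Rightarrow> (nat \<Rightarrow> 'g set) \<Rightarrow> bool" where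
  "is_partition G c P \<longleftrightarrow>
     (\<forall>j<c. P j \<subseteq> G) \<and>
     (\<forall>j<c. \<forall>j'<c. j \<noteq> j' \<longrightarrow> P j \<inter> P j' = {}) \<and>
     (\<Union>j<c. P j) = G"

definition additive :: "'g set \<Rightarrow> ('g set \<Rightarrow> real) \<Rightarrow> bool" where
  "additive G u \<longleftrightarrow> (\<forall>X\<subseteq>G. u X \<ge> 0) \<and> (\<forall>X\<subseteq>G. u X = (\<Sum>g\<in>X. u {g}))"

definition binary :: "'g set \<Rightarrow> ('g set \<Rightarrow> real) \<Rightarrow> bool" where
  "binary G u \<longleftrightarrow> additive G u \<and> (\<forall>g\<in>G. u {g} = 0 \<or> u {g} = 1)"

definition MMS :: "('g set \<Rightarrow> real) \<Rightarrow> 'g set \<Rightarrow> nat \<Rightarrow> real" where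
  "MMS u G c = Max {(MIN j\<in>{..<c}. u (P j)) | P. is_partition G c P}"

text \<open>EFc for the agent with utility u, who belongs to group i, under allocation P among k groups.\<close>
definition EFc :: "nat \<Rightarrow> ('g set \<Rightarrow> real) \<Rightarrow> (nat \<Rightarrow> 'g set) \<Rightarrow> nat \<Rightarrow> nat \<Rightarrow> bool" where
  "EFc k u P i c \<longleftrightarrow> (\<forall>i'<k. \<exists>C\<subseteq>P i'. card C \<le> c \<and> u (P i) \<ge> u (P i' - C))"

definition PROPc :: "'g set \<Rightarrow> nat \<Rightarrow> ('g set \<Rightarrow> real) \<Rightarrow> (nat \<Rightarrow> 'g set) \<Rightarrow> nat \<Rightarrow> nat \<Rightarrow> bool" where
  "PROPc G k u P i c \<longleftrightarrow> (\<exists>C\<subseteq>G - P i. card C \<le> c \<and> u (P i) \<ge> u (G - C) / real k)"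

definition MMS_fair :: "'g set \<Rightarrow> nat \<Rightarrow> ('g set \<Rightarrow> real) \<Rightarrow> (nat \<Rightarrow> 'g set) \<Rightarrow> nat \<Rightarrow> bool" where
  "MMS_fair G k u P i \<longleftrightarrow> u (P i) \<ge> MMS u G k"

definition one_of_c_MMS_fair :: "'g set \<Rightarrow> nat \<Rightarrow> ('g set \<Rightarrow> real) \<Rightarrow> (nat \<Rightarrow> 'g set) \<Rightarrow> nat \<Rightarrow> bool" where
  "one_of_c_MMS_fair G c u P i \<longleftrightarrow> u (P i) \<ge> MMS u G c"

definition frac_MMS_fair :: "'g set \<Rightarrow> nat \<Rightarrow> ('g set \<Rightarrow> real) \<Rightarrow> (nat \<Rightarrow> 'g set) \<Rightarrow> nat \<Rightarrow> real \<Rightarrow> bool" where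
  "frac_MMS_fair G k u P i q \<longleftrightarrow> u (P i) \<ge> q * MMS u G k"

end

theory Submission
  imports Defs "HOL-Library.FuncSet"
begin

lemma add_sum: "additive G u \<Longrightarrow> X \<subseteq> G \<Longrightarrow> u X = (\<Sum>g\<in>X. u {g})"
  unfolding additive_def by blast
lemma add_nonneg: "additive G u \<Longrightarrow> X \<subseteq> G \<Longrightarrow> u X \<ge> 0"
  unfolding additive_def by blast

lemma add_mono_u:
  assumes "additive G u" "finite G" "X \<subseteq> Y" "Y \<subseteq> G"
  shows "u X \<le> u Y"
proof -
  have "u X = (\<Sum>g\<in>X. u {g})" "u Y = (\<Sum>g\<in>Y. u {g})" using assms add_sum by (blast, blast)
  moreover have "(\<Sum>g\<in>X. u {g}) \<le> (\<Sum>g\<in>Y. u {g})"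
  proof (rule sum_mono2)
    show "finite Y" using assms finite_subset by blast
    show "X \<subseteq> Y" by (rule assms(3))
    fix b assume "b \<in> Y - X"
    then have "{b} \<subseteq> G" using assms by blast
    then show "0 \<le> u {b}" using add_nonneg[OF assms(1)] by blast
  qed
  ultimately show ?thesis by simp
qed

lemma MMS_set_finite:
  assumes "finite G"
  shows "finite {(MIN j\<in>{..<c}. u (P j)) | P. is_partition G c P}"
proof -
  have "{(MIN j\<in>{..<c}. u (P j)) | P. is_partition G c P}
     \<subseteq> (\<lambda>f. MIN j\<in>{..<c}. u (f j)) ` ({..<c} \<rightarrow>\<^sub>E Pow G)"
  proof
    fix x assume "x \<in> {(MIN j\<in>{..<c}. u (P j)) | P. is_partition G c P}"
    then obtain P where P: "is_partition G c P" "x = (MIN j\<in>{..<c}. u (P j))" by blast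
    have "\<forall>j<c. P j \<subseteq> G" using P(1) unfolding is_partition_def by blast
    then have "restrict P {..<c} \<in> {..<c} \<rightarrow>\<^sub>E Pow G" by (simp add: PiE_iff)
    moreover have "(\<lambda>j. u (restrict P {..<c} j)) ` {..<c} = (\<lambda>j. u (P j)) ` {..<c}" by simp
    then have "x = (MIN j\<in>{..<c}. u (restrict P {..<c} j))"
      using P(2) by simp
    ultimately show "x \<in> (\<lambda>f. MIN j\<in>{..<c}. u (f j)) ` ({..<c} \<rightarrow>\<^sub>E Pow G)" by blast
  qed
  moreover have "finite ({..<c} \<rightarrow>\<^sub>E Pow G)" using assms by (simp add: finite_PiE)
  ultimately show ?thesis using finite_subset by blast
qed

lemma triv_partition: "c \<ge> 1 \<Longrightarrow> is_partition G c (\<lambda>j. if j = 0 then G else {})"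
  unfolding is_partition_def by (auto split: if_splits)

lemma MMS_ge:
  assumes "finite G" "is_partition G c Q"
  shows "MMS u G c \<ge> (MIN j\<in>{..<c}. u (Q j))"
  unfolding MMS_def using MMS_set_finite[OF assms(1)] assms(2)
  by (intro Max_ge) blast+

lemma MMS_attained:
  assumes "finite G" "c \<ge> 1"
  shows "\<exists>Q. is_partition G c Q \<and> MMS u G c = (MIN j\<in>{..<c}. u (Q j))"
proof -
  have "{(MIN j\<in>{..<c}. u (P j)) | P. is_partition G c P} \<noteq> {}"
    using triv_partition[OF assms(2)] by blast
  from Max_in[OF MMS_set_finite[OF assms(1)] this] show ?thesis unfolding MMS_def by blast
qed

lemma MMS_props:
  assumes "finite G" "c \<ge> 1" "additive G u"
  obtains Q where "is_partition G c Q" "\<And>j. j < c \<Longrightarrow> u (Q j) \<ge> MMS u G c"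
    "\<exists>j0<c. MMS u G c = u (Q j0)" "MMS u G c \<ge> 0"
proof -
  obtain Q where Q: "is_partition G c Q" "MMS u G c = (MIN j\<in>{..<c}. u (Q j))"
    using MMS_attained[OF assms(1,2)] by blast
  have ne: "{..<c} \<noteq> {}" using assms(2) by (simp add: lessThan_empty_iff)
  have 1: "\<And>j. j < c \<Longrightarrow> u (Q j) \<ge> MMS u G c" using Q(2) by simp
  have "(MIN j\<in>{..<c}. u (Q j)) \<in> (\<lambda>j. u (Q j)) ` {..<c}" using ne by (intro Min_in) auto
  then have 2: "\<exists>j0<c. MMS u G c = u (Q j0)" using Q(2) by auto
  then have "MMS u G c \<ge> 0" using Q(1) add_nonneg[OF assms(3)] unfolding is_partition_def by metis
  then show ?thesis using that Q(1) 1 2 by blast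
qed

lemma key:
  assumes "additive G u" "finite G" "is_partition G c Q" "\<And>j. j < c \<Longrightarrow> u (Q j) \<ge> M"
    "M \<ge> 0" "C \<subseteq> G"
  shows "u (G - C) \<ge> real (c - card C) * M"
proof -
  define bad where "bad = {j. j < c \<and> Q j \<inter> C \<noteq> {}}"
  define good where "good = {..<c} - bad"
  define f where "f j = (SOME x. x \<in> Q j \<inter> C)" for j
  have fin: "finite C" using assms(2,6) finite_subset by blast
  have fin_bad: "finite bad" unfolding bad_def by auto
  have fin_good: "finite good" unfolding good_def by auto
  have disj: "\<And>j j'. j < c \<Longrightarrow> j' < c \<Longrightarrow> j \<noteq> j' \<Longrightarrow> Q j \<inter> Q j' = {}"
    using assms(3) unfolding is_partition_def by blast
  have subG: "\<And>j. j < c \<Longrightarrow> Q j \<subseteq> G" using assms(3) unfolding is_partition_def by blast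
  have fQ: "f j \<in> Q j \<inter> C" if "j \<in> bad" for j
  proof -
    have "Q j \<inter> C \<noteq> {}" using that by (simp add: bad_def)
    then show ?thesis unfolding f_def by (rule some_in_eq[THEN iffD2])
  qed
  have "inj_on f bad"
  proof
    fix x y assume xy: "x \<in> bad" "y \<in> bad" "f x = f y"
    have "f x \<in> Q x \<inter> Q y" using fQ[OF xy(1)] fQ[OF xy(2)] xy(3) by simp
    then have "Q x \<inter> Q y \<noteq> {}" by blast
    moreover have "x < c" "y < c" using xy by (auto simp: bad_def)
    ultimately show "x = y" using disj by blast
  qed
  then have "card bad \<le> card C" using fQ fin by (intro card_inj_on_le) auto
  moreover have "card good = c - card bad" unfolding good_def
    by (subst card_Diff_subset) (auto simp: bad_def)
  ultimately have cg: "card good \<ge> c - card C" by linarith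
  have sub: "(\<Union>j\<in>good. Q j) \<subseteq> G - C"
  proof
    fix x assume "x \<in> (\<Union>j\<in>good. Q j)"
    then obtain j where j: "j \<in> good" "x \<in> Q j" by blast
    then have "j < c" "Q j \<inter> C = {}" by (simp_all add: good_def bad_def)
    then show "x \<in> G - C" using j subG by blast
  qed
  have "u (\<Union>j\<in>good. Q j) = (\<Sum>g\<in>(\<Union>j\<in>good. Q j). u {g})"
    using add_sum[OF assms(1)] sub by (meson Diff_subset order_trans)
  also have "\<dots> = (\<Sum>j\<in>good. \<Sum>g\<in>Q j. u {g})"
  proof (rule sum.UNION_disjoint)
    show "finite good" by (rule fin_good)
    show "\<forall>i\<in>good. finite (Q i)"
    proof
      fix i assume "i \<in> good"
      then have "i < c" by (simp add: good_def)
      then show "finite (Q i)" using subG assms(2) by (meson finite_subset)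
    qed
    show "\<forall>i\<in>good. \<forall>j\<in>good. i \<noteq> j \<longrightarrow> Q i \<inter> Q j = {}" using disj by (auto simp: good_def)
  qed
  also have "\<dots> = (\<Sum>j\<in>good. u (Q j))"
  proof (rule sum.cong)
    fix j assume "j \<in> good"
    then have "Q j \<subseteq> G" using subG by (auto simp: good_def)
    then show "(\<Sum>g\<in>Q j. u {g}) = u (Q j)" using add_sum[OF assms(1)] by metis
  qed simp
  also have "\<dots> \<ge> real (card good) * M"
    by (rule sum_bounded_below) (use assms(4) in \<open>auto simp: good_def\<close>)
  finally have "u (\<Union>j\<in>good. Q j) \<ge> real (card good) * M" .
  moreover have "u (\<Union>j\<in>good. Q j) \<le> u (G - C)" using add_mono_u[OF assms(1,2) sub] by auto
  moreover have "real (c - card C) * M \<le> real (card good) * M"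
    using cg assms(5) by (intro mult_right_mono) auto
  ultimately show ?thesis by linarith
qed

lemma partA:
  assumes "k \<ge> 2" "finite G" "additive G u" "is_partition G k P" "i < k" "PROPc G k u P i (k - 1)"
  shows "frac_MMS_fair G k u P i (1 / real k)"
proof -
  obtain Q where Q: "is_partition G k Q" "\<And>j. j < k \<Longrightarrow> u (Q j) \<ge> MMS u G k" "MMS u G k \<ge> 0"
    using MMS_props[OF assms(2) _ assms(3), of k] assms(1) by auto
  obtain C where C: "C \<subseteq> G - P i" "card C \<le> k - 1" "u (P i) \<ge> u (G - C) / real k"
    using assms(6) unfolding PROPc_def by blast
  have "u (G - C) \<ge> real (k - card C) * MMS u G k"
    using key[OF assms(3,2) Q(1) Q(2) Q(3)] C(1) by blast
  moreover have "real (k - card C) \<ge> 1" using C(2) assms(1) by auto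
  then have "1 * MMS u G k \<le> real (k - card C) * MMS u G k" using Q(3) by (rule mult_right_mono)
  ultimately have "u (G - C) \<ge> MMS u G k" by simp
  then have "u (G - C) / real k \<ge> MMS u G k / real k" using assms(1) by (simp add: divide_right_mono)
  then show ?thesis using C(3) unfolding frac_MMS_fair_def by simp
qed

lemma partB:
  assumes "k \<ge> 2" "finite G" "additive G u" "is_partition G k P" "i < k" "PROPc G k u P i (k - 1)"
  shows "one_of_c_MMS_fair G (2 * k - 1) u P i"
proof -
  have c1: "1 \<le> 2*k-1" using assms(1) by simp
  obtain Q where Q: "is_partition G (2*k-1) Q" "\<And>j. j < 2*k-1 \<Longrightarrow> u (Q j) \<ge> MMS u G (2*k-1)"
     "MMS u G (2*k-1) \<ge> 0"
    using MMS_props[OF assms(2) c1 assms(3)] by blast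
  obtain C where C: "C \<subseteq> G - P i" "card C \<le> k - 1" "u (P i) \<ge> u (G - C) / real k"
    using assms(6) unfolding PROPc_def by blast
  have "u (G - C) \<ge> real (2*k-1 - card C) * MMS u G (2*k-1)"
    using key[OF assms(3,2) Q(1) Q(2) Q(3)] C(1) by blast
  moreover have "real (2*k-1 - card C) \<ge> real k" using C(2) assms(1) by auto
  then have "real k * MMS u G (2*k-1) \<le> real (2*k-1 - card C) * MMS u G (2*k-1)" using Q(3) by (rule mult_right_mono)
  ultimately have "u (G - C) \<ge> real k * MMS u G (2*k-1)" by simp
  then have "u (G - C) / real k \<ge> MMS u G (2*k-1)" using assms(1) by (simp add: field_simps)
  then show ?thesis using C(3) unfolding one_of_c_MMS_fair_def by simp
qed

lemma binary_u:
  assumes "binary G u" "finite G" "X \<subseteq> G"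
  shows "u X = real (card (X \<inter> {g\<in>G. u {g} = 1}))"
proof -
  have "u X = (\<Sum>g\<in>X. u {g})" using assms add_sum unfolding binary_def by blast
  also have "\<dots> = (\<Sum>g\<in>X. if g \<in> {g\<in>G. u {g} = 1} then 1 else 0)"
  proof (rule sum.cong)
    fix x assume "x \<in> X"
    then have "x \<in> G" "u {x} = 0 \<or> u {x} = 1" using assms unfolding binary_def by blast+
    then show "u {x} = (if x \<in> {g\<in>G. u {g} = 1} then 1 else 0)" by auto
  qed simp
  also have "\<dots> = real (card (X \<inter> {g\<in>G. u {g} = 1}))"
  proof -
    define V where "V = {g\<in>G. u {g} = 1}"
    have fX: "finite X" using assms(2,3) finite_subset by blast
    have "(\<Sum>g\<in>X. if g \<in> V then (1::real) else 0) = (\<Sum>g\<in>X \<inter> V. 1)"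
      using fX by (rule sum.inter_restrict[symmetric])
    then show ?thesis unfolding V_def by simp
  qed
  finally show ?thesis .
qed

lemma part_of_fun:
  assumes "\<And>g. g \<in> G \<Longrightarrow> f g < c"
  shows "is_partition G c (\<lambda>j. {g\<in>G. f g = j})"
  unfolding is_partition_def using assms by auto

lemma binary_additive: "binary G u \<Longrightarrow> additive G u" unfolding binary_def by blast

lemma partC1:
  assumes "k \<ge> 2" "finite G" "binary G u" "is_partition G k P" "i < k" "PROPc G k u P i (k - 1)"
  shows "MMS_fair G k u P i"
proof -
  define V where "V = {g\<in>G. u {g} = 1}"
  have add: "additive G u" using assms(3) by (rule binary_additive)
  have VG: "V \<subseteq> G" unfolding V_def by blast
  have fV: "finite V" using VG assms(2) finite_subset by blast
  obtain Q where Q: "is_partition G k Q" "\<And>j. j < k \<Longrightarrow> u (Q j) \<ge> MMS u G k"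
    "\<exists>j0<k. MMS u G k = u (Q j0)" "MMS u G k \<ge> 0"
    using MMS_props[OF assms(2) _ add, of k] assms(1) by auto
  obtain j0 where j0: "j0 < k" "MMS u G k = u (Q j0)" using Q(3) by blast
  have "Q j0 \<subseteq> G" using Q(1) j0(1) unfolding is_partition_def by blast
  then obtain m :: nat where m: "MMS u G k = real m"
    using binary_u[OF assms(3,2)] j0(2) by metis
  have "u (G - {}) \<ge> real (k - card {}) * MMS u G k"
    using key[OF add assms(2) Q(1) Q(2) Q(4), of "{}"] by simp
  moreover have "u G = real (card V)" using binary_u[OF assms(3,2), of G] unfolding V_def
    by (simp add: Int_absorb1)
  ultimately have km: "real k * real m \<le> real (card V)" using m by simp
  obtain C where C: "C \<subseteq> G - P i" "card C \<le> k - 1" "u (P i) \<ge> u (G - C) / real k"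
    using assms(6) unfolding PROPc_def by blast
  have PiG: "P i \<subseteq> G" using assms(4,5) unfolding is_partition_def by blast
  define v where "v = card (P i \<inter> V)"
  have uv: "u (P i) = real v" using binary_u[OF assms(3,2) PiG] unfolding v_def V_def by simp
  have fC: "finite C" using C(1) assms(2) finite_subset by blast
  have "u (G - C) = real (card ((G - C) \<inter> V))" using binary_u[OF assms(3,2), of "G - C"]
    unfolding V_def by simp
  also have "(G - C) \<inter> V = V - C" using VG by blast
  finally have "u (G - C) = real (card (V - C))" .
  moreover have "card V - card C \<le> card (V - C)" using fC by (rule diff_card_le_card_Diff)
  ultimately have "u (G - C) \<ge> real (card V) - real (card C)" by linarith
  then have "u (G - C) \<ge> real (card V) - (real k - 1)" using C(2) assms(1) by linarith
  then have "real k * real v \<ge> real (card V) - (real k - 1)"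
    using C(3) uv assms(1) by (simp add: field_simps)
  with km have "real k * (real v + 1) > real k * real m" by (simp add: algebra_simps)
  then have "real v + 1 > real m" using assms(1) by (simp add: mult_less_cancel_left)
  then have "v \<ge> m" by linarith
  then show ?thesis unfolding MMS_fair_def using uv m by simp
qed

lemma binary_MMS_lb:
  assumes "k \<ge> 1" "finite G" "binary G u"
  shows "MMS u G k \<ge> real (card {g\<in>G. u {g} = 1} div k)"
proof -
  define V where "V = {g\<in>G. u {g} = 1}"
  define n where "n = card V"
  have VG: "V \<subseteq> G" unfolding V_def by blast
  have fV: "finite V" using VG assms(2) finite_subset by blast
  obtain e where e: "bij_betw e {0..<n} V" using ex_bij_betw_nat_finite[OF fV] unfolding n_def by blast
  have inj: "inj_on e {0..<n}" using e bij_betw_def by blast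
  have eV: "\<And>t. t < n \<Longrightarrow> e t \<in> V" using e bij_betwE by fastforce
  define q where "q g = (if g \<in> V then the_inv_into {0..<n} e g mod k else 0)" for g
  have kpos: "k > 0" using assms(1) by simp
  have Qp: "is_partition G k (\<lambda>j. {g\<in>G. q g = j})"
    by (rule part_of_fun) (simp add: q_def kpos)
  have qe: "q (e t) = t mod k" if "t < n" for t
    using eV[OF that] the_inv_into_f_f[OF inj] that unfolding q_def by simp
  have lb: "u {g\<in>G. q g = j} \<ge> real (n div k)" if j: "j < k" for j
  proof -
    define T where "T = (\<lambda>s. j + k * s) ` {..<n div k}"
    have Tn: "T \<subseteq> {0..<n}"
    proof
      fix t assume "t \<in> T"
      then obtain s where s: "s < n div k" "t = j + k * s" unfolding T_def by blast
      have "k * (s + 1) \<le> k * (n div k)" using s(1) by (intro mult_le_mono2) simp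
      also have "\<dots> \<le> n" by simp
      finally show "t \<in> {0..<n}" using s(2) j by simp
    qed
    have cT: "card T = n div k" unfolding T_def
      by (subst card_image) (auto simp: inj_on_def kpos)
    have sub: "e ` T \<subseteq> {g\<in>G. q g = j} \<inter> V"
    proof
      fix x assume "x \<in> e ` T"
      then obtain s where s: "s < n div k" "x = e (j + k * s)" unfolding T_def by blast
      have lt: "j + k * s < n" using Tn s(1) unfolding T_def by auto
      have "q x = j" using qe[OF lt] s(2) j by simp
      then show "x \<in> {g\<in>G. q g = j} \<inter> V" using eV[OF lt] s(2) VG by auto
    qed
    have "card (e ` T) = n div k" using cT inj_on_subset[OF inj Tn] by (simp add: card_image)
    moreover have "card (e ` T) \<le> card ({g\<in>G. q g = j} \<inter> V)"
      using sub fV by (intro card_mono) auto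
    moreover have "u {g\<in>G. q g = j} = real (card ({g\<in>G. q g = j} \<inter> V))"
      using binary_u[OF assms(3,2), of "{g\<in>G. q g = j}"] unfolding V_def by simp
    ultimately show ?thesis by simp
  qed
  have "MMS u G k \<ge> (MIN j\<in>{..<k}. u {g\<in>G. q g = j})" by (rule MMS_ge[OF assms(2) Qp])
  moreover have "(MIN j\<in>{..<k}. u {g\<in>G. q g = j}) \<ge> real (n div k)"
    using lb kpos by (subst Min_ge_iff) auto
  ultimately show ?thesis unfolding n_def V_def by linarith
qed

lemma partC2:
  assumes "k \<ge> 2" "finite G" "binary G u" "is_partition G k P" "i < k" "MMS_fair G k u P i"
  shows "PROPc G k u P i (k - 1)"
proof -
  define V where "V = {g\<in>G. u {g} = 1}"
  define n where "n = card V"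
  have VG: "V \<subseteq> G" unfolding V_def by blast
  have fV: "finite V" using VG assms(2) finite_subset by blast
  have PiG: "P i \<subseteq> G" using assms(4,5) unfolding is_partition_def by blast
  define v where "v = card (P i \<inter> V)"
  have uv: "u (P i) = real v" using binary_u[OF assms(3,2) PiG] unfolding v_def V_def by simp
  have "real v \<ge> real (n div k)" using binary_MMS_lb[OF _ assms(2,3), of k] assms(1,6) uv
    unfolding MMS_fair_def n_def V_def by simp
  then have vn: "v \<ge> n div k" by simp
  have "n = k * (n div k) + n mod k" by simp
  moreover have "n mod k \<le> k - 1" using assms(1) by (metis Suc_pred' less_Suc_eq_le mod_less_divisor le_trans order.refl nat_less_le zero_less_iff_neq_zero not_numeral_le_zero)
  moreover have "k * (n div k) \<le> k * v" using vn by (rule mult_le_mono2)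
  ultimately have kv: "n - (k - 1) \<le> k * v" by linarith
  define W where "W = V - P i"
  have WPV: "W = V - (P i \<inter> V)" unfolding W_def by blast
  have cW: "card W = n - v" unfolding WPV n_def v_def using fV by (subst card_Diff_subset) auto
  have kpos: "real k > 0" using assms(1) by simp
  show ?thesis
  proof (cases "card W \<le> k - 1")
    case True
    have "W \<subseteq> G - P i" unfolding W_def using VG by blast
    moreover have "(G - W) \<inter> V = P i \<inter> V" unfolding W_def using VG by blast
    then have "u (G - W) = real v" using binary_u[OF assms(3,2), of "G - W"] unfolding v_def V_def by simp
    moreover have "real v \<ge> real v / real k"
      using kpos assms(1) mult_left_mono[of 1 "real k" "real v"] by (simp add: divide_le_eq)
    ultimately show ?thesis unfolding PROPc_def using True uv by metis
  next
    case False
    then obtain C where C: "C \<subseteq> W" "card C = k - 1" "finite C"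
      using obtain_subset_with_card_n[of "k - 1" W] by auto
    have CV: "C \<subseteq> V" using C(1) unfolding W_def by blast
    have "(G - C) \<inter> V = V - C" using VG by blast
    then have "u (G - C) = real (card (V - C))" using binary_u[OF assms(3,2), of "G - C"] unfolding V_def by simp
    also have "card (V - C) = n - (k - 1)" unfolding n_def using CV C(2) fV by (simp add: card_Diff_subset finite_subset)
    finally have "u (G - C) = real (n - (k - 1))" .
    moreover have "real (n - (k - 1)) \<le> real k * real v" using kv by (metis of_nat_le_iff of_nat_mult)
    ultimately have "u (P i) \<ge> u (G - C) / real k" using uv kpos by (simp add: divide_le_eq mult.commute)
    moreover have "C \<subseteq> G - P i" using C(1) VG unfolding W_def by blast
    ultimately show ?thesis unfolding PROPc_def using C(2) by (metis order.refl)
  qed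
qed

lemma sum_units:
  assumes "finite S" "\<And>g. g \<in> S \<Longrightarrow> g < N"
  shows "(\<Sum>g\<in>S. if g < N then 1 else (r::real)) = real (card S)"
proof -
  have "(\<Sum>g\<in>S. if g < N then 1 else r) = (\<Sum>g\<in>S. 1)" using assms(2) by (intro sum.cong) auto
  then show ?thesis by simp
qed

lemma exA:
  assumes "k \<ge> 2"
  shows "\<exists>(G::nat set) u P i. finite G \<and> additive G u \<and> is_partition G k P \<and> i < k \<and>
        EFc k u P i 1 \<and> MMS u G k > 0 \<and> u (P i) = MMS u G k / real k"
proof -
  define G where "G = {0..<2*k-1}"
  define u where "u X = (\<Sum>g\<in>X. if g < k then 1 else real k)" for X :: "nat set"
  define own where "own g = (if g < k then g else g - k + 1)" for g :: nat
  define P where "P j = {g\<in>G. own g = j}" for j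
  have fG: "finite G" unfolding G_def by simp
  have add: "additive G u" unfolding additive_def u_def by (auto intro: sum_nonneg)
  have P: "is_partition G k P" unfolding P_def by (rule part_of_fun) (auto simp: own_def G_def)
  have P0: "P 0 = {0}" using assms unfolding P_def own_def G_def by auto
  have uP0: "u (P 0) = 1" unfolding P0 u_def using assms by simp
  have uG: "u G = real k * real k"
  proof -
    have "u G = (\<Sum>g\<in>{0..<k}. if g < k then 1 else real k) + (\<Sum>g\<in>{k..<2*k-1}. if g < k then 1 else real k)"
      unfolding u_def G_def using assms by (subst sum.atLeastLessThan_concat) auto
    also have "(\<Sum>g\<in>{0..<k}. if g < k then 1 else real k) = real k" by (subst sum_units) auto
    also have "(\<Sum>g\<in>{k..<2*k-1}. if g < k then 1 else real k) = (\<Sum>g\<in>{k..<2*k-1}. real k)"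
      by (intro sum.cong) auto
    also have "\<dots> = real (k - 1) * real k" using assms by simp
    finally show ?thesis using assms by (simp add: of_nat_diff algebra_simps)
  qed
  define q where "q g = (if g < k then k - 1 else g - k)" for g :: nat
  define Q where "Q j = {g\<in>G. q g = j}" for j
  have Q: "is_partition G k Q" unfolding Q_def by (rule part_of_fun) (auto simp: q_def G_def)
  have uQ: "u (Q j) \<ge> real k" if "j < k" for j
  proof (cases "j = k - 1")
    case True
    have sub: "{0..<k} \<subseteq> Q j" using True assms unfolding Q_def q_def G_def by auto
    have "u {0..<k} = real k" unfolding u_def by (subst sum_units) auto
    moreover have "u {0..<k} \<le> u (Q j)" using add_mono_u[OF add fG sub] Q that
      unfolding is_partition_def by blast
    ultimately show ?thesis by simp
  next
    case False
    have sub: "{k + j} \<subseteq> Q j" using False that assms unfolding Q_def q_def G_def by auto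
    have "u {k + j} = real k" unfolding u_def by simp
    moreover have "u {k + j} \<le> u (Q j)" using add_mono_u[OF add fG sub] Q that
      unfolding is_partition_def by blast
    ultimately show ?thesis by simp
  qed
  have "MMS u G k \<ge> (MIN j\<in>{..<k}. u (Q j))" by (rule MMS_ge[OF fG Q])
  moreover have "(MIN j\<in>{..<k}. u (Q j)) \<ge> real k"
    using uQ assms by (subst Min_ge_iff) (auto simp: lessThan_empty_iff)
  ultimately have ge: "MMS u G k \<ge> real k" by linarith
  obtain Q' where Q': "is_partition G k Q'" "\<And>j. j < k \<Longrightarrow> u (Q' j) \<ge> MMS u G k" "MMS u G k \<ge> 0"
    using MMS_props[OF fG _ add, of k] assms by auto
  have "u (G - {}) \<ge> real (k - card {}) * MMS u G k"
    using key[OF add fG Q'(1) Q'(2) Q'(3), of "{}"] by simp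
  then have "real k * MMS u G k \<le> real k * real k" using uG by simp
  then have "MMS u G k \<le> real k" using assms by simp
  with ge have M: "MMS u G k = real k" by simp
  have EF: "EFc k u P 0 1"
    unfolding EFc_def
  proof (intro allI impI)
    fix i' assume i': "i' < k"
    show "\<exists>C\<subseteq>P i'. card C \<le> 1 \<and> u (P 0) \<ge> u (P i' - C)"
    proof (cases "i' = 0")
      case True then show ?thesis by (intro exI[of _ "{}"]) simp
    next
      case False
      have inP: "k + i' - 1 \<in> P i'" using False i' assms unfolding P_def own_def G_def by auto
      have sub: "P i' - {k + i' - 1} \<subseteq> {i'}" using False unfolding P_def own_def by auto
      have iG: "{i'} \<subseteq> G" using i' assms unfolding G_def by auto
      have "u (P i' - {k + i' - 1}) \<le> u {i'}" by (rule add_mono_u[OF add fG sub iG])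
      also have "u {i'} = 1" unfolding u_def using i' by simp
      finally show ?thesis using inP uP0 by (intro exI[of _ "{k + i' - 1}"]) auto
    qed
  qed
  show ?thesis
    apply (rule exI[of _ G], rule exI[of _ u], rule exI[of _ P], rule exI[of _ 0])
    using fG add P EF M uP0 assms by auto
qed

lemma exB:
  assumes "k \<ge> 2"
  shows "\<exists>(G::nat set) u P i. finite G \<and> additive G u \<and> is_partition G k P \<and> i < k \<and>
        EFc k u P i 1 \<and> \<not> one_of_c_MMS_fair G (2 * k - 2) u P i"
proof -
  define N where "N = k * (k - 1)"
  define G where "G = {0..<N + (k - 1)}"
  define u where "u X = (\<Sum>g\<in>X. if g < N then 1 else real k)" for X :: "nat set"
  define own where "own g = (if g < N then g div (k - 1) else g - N + 1)" for g :: nat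
  define P where "P j = {g\<in>G. own g = j}" for j
  have k1: "k - 1 > 0" using assms by simp
  have fG: "finite G" unfolding G_def by simp
  have add: "additive G u" unfolding additive_def u_def by (auto intro: sum_nonneg)
  have ownlt: "own g < k" if "g \<in> G" for g
  proof (cases "g < N")
    case True
    then have "g < k * (k - 1)" unfolding N_def .
    then have "g div (k - 1) < k" by (rule less_mult_imp_div_less)
    then show ?thesis using True unfolding own_def by simp
  next
    case False
    then show ?thesis using that assms unfolding own_def G_def by auto
  qed
  have P: "is_partition G k P" unfolding P_def by (rule part_of_fun) (rule ownlt)
  have kN: "k - 1 \<le> N" unfolding N_def using assms by simp
  have P0: "P 0 = {0..<k-1}"
  proof
    show "P 0 \<subseteq> {0..<k-1}"
    proof
      fix g assume "g \<in> P 0"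
      then have "g \<in> G" "own g = 0" unfolding P_def by auto
      then have "g < N" "g div (k - 1) = 0" unfolding own_def by (auto split: if_splits)
      then show "g \<in> {0..<k-1}" using k1 by (simp add: div_eq_0_iff)
    qed
    show "{0..<k-1} \<subseteq> P 0" using kN unfolding P_def own_def G_def by auto
  qed
  have uP0: "u (P 0) = real (k - 1)" unfolding P0 u_def using kN by (subst sum_units) auto
  define q where "q g = (if g < N then (k - 1) + g div k else g - N)" for g :: nat
  define Q where "Q j = {g\<in>G. q g = j}" for j
  have qlt: "q g < 2 * k - 2" if "g \<in> G" for g
  proof (cases "g < N")
    case True
    then have "g < (k - 1) * k" unfolding N_def by (simp add: mult.commute)
    then have "g div k < k - 1" by (rule less_mult_imp_div_less)
    then show ?thesis using True unfolding q_def by simp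
  next
    case False
    then show ?thesis using that assms unfolding q_def G_def by auto
  qed
  have Q: "is_partition G (2*k-2) Q" unfolding Q_def by (rule part_of_fun) (rule qlt)
  have uQ: "u (Q j) \<ge> real k" if j: "j < 2*k-2" for j
  proof (cases "j < k - 1")
    case True
    have sub: "{N + j} \<subseteq> Q j" using True unfolding Q_def q_def G_def by auto
    have "u {N + j} = real k" unfolding u_def by simp
    moreover have "u {N + j} \<le> u (Q j)" using add_mono_u[OF add fG sub] Q j
      unfolding is_partition_def by blast
    ultimately show ?thesis by simp
  next
    case False
    define m where "m = j - (k - 1)"
    have m: "m < k - 1" "j = (k - 1) + m" using False j unfolding m_def by auto
    have mk: "m * k + k \<le> N" unfolding N_def using m(1)
      by (metis Suc_leI add.commute mult.commute mult_Suc_right mult_le_mono2)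
    have sub: "{m*k..<m*k+k} \<subseteq> Q j"
    proof
      fix g assume g: "g \<in> {m*k..<m*k+k}"
      then have gN: "g < N" using mk by auto
      have "g div k = m" using g by (intro div_nat_eqI) (auto simp: mult.commute)
      then show "g \<in> Q j" using gN m(2) unfolding Q_def q_def G_def by auto
    qed
    have "u {m*k..<m*k+k} = real k" unfolding u_def using mk by (subst sum_units) auto
    moreover have "u {m*k..<m*k+k} \<le> u (Q j)" using add_mono_u[OF add fG sub] Q j
      unfolding is_partition_def by blast
    ultimately show ?thesis by simp
  qed
  have "MMS u G (2*k-2) \<ge> (MIN j\<in>{..<2*k-2}. u (Q j))" by (rule MMS_ge[OF fG Q])
  moreover have "(MIN j\<in>{..<2*k-2}. u (Q j)) \<ge> real k"
    using uQ assms by (subst Min_ge_iff) (auto simp: lessThan_empty_iff)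
  ultimately have ge: "MMS u G (2*k-2) \<ge> real k" by linarith
  have notfair: "\<not> one_of_c_MMS_fair G (2 * k - 2) u P 0"
    unfolding one_of_c_MMS_fair_def uP0 using ge assms by (simp add: of_nat_diff)
  have EF: "EFc k u P 0 1"
    unfolding EFc_def
  proof (intro allI impI)
    fix i' assume i': "i' < k"
    show "\<exists>C\<subseteq>P i'. card C \<le> 1 \<and> u (P 0) \<ge> u (P i' - C)"
    proof (cases "i' = 0")
      case True then show ?thesis by (intro exI[of _ "{}"]) simp
    next
      case False
      have inP: "N + i' - 1 \<in> P i'" using False i' assms unfolding P_def own_def G_def by auto
      define I where "I = {i' * (k-1)..<i' * (k-1) + (k-1)}"
      have sub: "P i' - {N + i' - 1} \<subseteq> I"
      proof
        fix g assume g: "g \<in> P i' - {N + i' - 1}"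
        then have "g < N" "g div (k - 1) = i'" using False unfolding P_def own_def by (auto split: if_splits)
        then show "g \<in> I" unfolding I_def using k1
          by (metis atLeastLessThan_iff div_times_less_eq_dividend dividend_less_div_times add.commute mult.commute)
      qed
      have IN: "i' * (k-1) + (k-1) \<le> N" unfolding N_def using i'
        by (metis Suc_leI add.commute mult.commute mult_Suc_right mult_le_mono2)
      have iG: "I \<subseteq> G" using IN unfolding I_def G_def by auto
      have "u (P i' - {N + i' - 1}) \<le> u I" by (rule add_mono_u[OF add fG sub iG])
      also have "u I = real (k - 1)" unfolding u_def I_def using IN by (subst sum_units) auto
      finally show ?thesis using inP uP0 by (intro exI[of _ "{N + i' - 1}"]) auto
    qed
  qed
  show ?thesis
    apply (rule exI[of _ G], rule exI[of _ u], rule exI[of _ P], rule exI[of _ 0])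
    using fG add P EF notfair assms by auto
qed

theorem mainTheorem2:
  fixes k :: nat
  assumes "k \<ge> 2"
  shows
   "(\<forall>(G::'g set) u P i. finite G \<and> additive G u \<and> is_partition G k P \<and> i < k \<and>
        PROPc G k u P i (k - 1) \<longrightarrow> frac_MMS_fair G k u P i (1 / real k))
  \<and> (\<exists>(G::nat set) u P i. finite G \<and> additive G u \<and> is_partition G k P \<and> i < k \<and>
        EFc k u P i 1 \<and> MMS u G k > 0 \<and> u (P i) = MMS u G k / real k)
  \<and> (\<forall>(G::'g set) u P i. finite G \<and> additive G u \<and> is_partition G k P \<and> i < k \<and>
        PROPc G k u P i (k - 1) \<longrightarrow> one_of_c_MMS_fair G (2 * k - 1) u P i)
  \<and> (\<exists>(G::nat set) u P i. finite G \<and> additive G u \<and> is_partition G k P \<and> i < k \<and>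
        EFc k u P i 1 \<and> \<not> one_of_c_MMS_fair G (2 * k - 2) u P i)
  \<and> (\<forall>(G::'g set) u P i. finite G \<and> binary G u \<and> is_partition G k P \<and> i < k \<and>
        PROPc G k u P i (k - 1) \<longrightarrow> MMS_fair G k u P i)
  \<and> (\<forall>(G::'g set) u P i. finite G \<and> binary G u \<and> is_partition G k P \<and> i < k \<and>
        MMS_fair G k u P i \<longrightarrow> PROPc G k u P i (k - 1))"
proof (intro conjI)
  show "\<forall>(G::'g set) u P i. finite G \<and> additive G u \<and> is_partition G k P \<and> i < k \<and>
        PROPc G k u P i (k - 1) \<longrightarrow> frac_MMS_fair G k u P i (1 / real k)"
    using partA[OF assms] by blast
  show "\<exists>(G::nat set) u P i. finite G \<and> additive G u \<and> is_partition G k P \<and> i < k \<and>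
        EFc k u P i 1 \<and> MMS u G k > 0 \<and> u (P i) = MMS u G k / real k"
    by (rule exA[OF assms])
  show "\<forall>(G::'g set) u P i. finite G \<and> additive G u \<and> is_partition G k P \<and> i < k \<and>
        PROPc G k u P i (k - 1) \<longrightarrow> one_of_c_MMS_fair G (2 * k - 1) u P i"
    using partB[OF assms] by blast
  show "\<exists>(G::nat set) u P i. finite G \<and> additive G u \<and> is_partition G k P \<and> i < k \<and>
        EFc k u P i 1 \<and> \<not> one_of_c_MMS_fair G (2 * k - 2) u P i"
    by (rule exB[OF assms])
  show "\<forall>(G::'g set) u P i. finite G \<and> binary G u \<and> is_partition G k P \<and> i < k \<and>
        PROPc G k u P i (k - 1) \<longrightarrow> MMS_fair G k u P i"
    using partC1[OF assms] by blast
  show "\<forall>(G::'g set) u P i. finite G \<and> binary G u \<and> is_partition G k P \<and> i < k \<and>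
        MMS_fair G k u P i \<longrightarrow> PROPc G k u P i (k - 1)"
    using partC2[OF assms] by blast
qed

end
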